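(* Let $a,b\ge 0$ and $0\le v\le 1$. Let $g:[0,1]\to\mathbb{R}$ be non-decreasing on $[0,1]$ with $g(1)\neq g(0)$. Then \[ a\sharp_v b+\frac{4}{g(1)-g(0)}\int_{0}^{1}\left(F_{t,v}(a,b)-F_{1/2,v}(a,b)\right)g(t)\,dt\le a\nabla_v b. \] In particular, \[ a\sharp b+\frac{4}{g(1)-g(0)}\left[\int_{0}^{1}g(t)F_{t,1/2}(a,b)\,dt-F_{1/2,1/2}(a,b)\int_{0}^{1}g(t)\,dt\right]\le a\nabla b. \]
   Context: For $a,b\ge 0$ and $0\le v\le 1$: $a\sharp_v b:=a^{1-v}b^{v}$ (weighted geometric mean) and $a\nabla_v b:=(1-v)a+vb$ (weighted arithmetic mean); $a\sharp b:=a\sharp_{1/2}b=\sqrt{ab}$ and $a\nabla b:=a\nabla_{1/2}b=\frac{a+b}{2}$. The Heron mean is $F_{t,v}(a,b):=(1-t)(a\sharp_v b)+t(a\nabla_v b)$ for $0\le t,v\le 1$. *)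

theory Defs
  imports "HOL-Analysis.Analysis"
begin

text \<open>Weighted geometric mean a^(1-v) b^v, with the convention x^0 = 1 (also for x = 0),
  since Isabelle has 0 powr 0 = 0.\<close>
definition wgeo :: "real \<Rightarrow> real \<Rightarrow> real \<Rightarrow> real" where
  "wgeo v a b = (if v = 1 then 1 else a powr (1 - v)) * (if v = 0 then 1 else b powr v)"

definition wari :: "real \<Rightarrow> real \<Rightarrow> real \<Rightarrow> real" where
  "wari v a b = (1 - v) * a + v * b"

definition heron :: "real \<Rightarrow> real \<Rightarrow> real \<Rightarrow> real \<Rightarrow> real" where
  "heron t v a b = (1 - t) * wgeo v a b + t * wari v a b"

end

theory Submission
  imports Defs
begin

lemma amgm:
  fixes a b v :: real
  assumes "a \<ge> 0" "b \<ge> 0" "0 \<le> v" "v \<le> 1"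
  shows "wgeo v a b \<le> wari v a b"
proof -
  consider "v = 0" | "v = 1" | "0 < v" "v < 1" using assms by linarith
  then show ?thesis
  proof cases
    case 1 then show ?thesis using assms by (simp add: wgeo_def wari_def)
  next
    case 2 then show ?thesis using assms by (simp add: wgeo_def wari_def)
  next
    case 3
    show ?thesis
    proof (cases "a = 0 \<or> b = 0")
      case True then show ?thesis using 3 assms by (auto simp: wgeo_def wari_def)
    next
      case False
      then have "a > 0" "b > 0" using assms by auto
      then have "a powr (1 - v) * b powr v \<le> (1 - v) * a + v * b"
        using Youngs_inequality_0[of "1 - v" v a b] 3 by simp
      then show ?thesis using 3 by (simp add: wgeo_def wari_def)
    qed
  qed
qed

lemma tg_integrable:
  fixes g :: "real \<Rightarrow> real"
  assumes "mono_on {0..1} g"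
  shows "(\<lambda>t. (t - 1/2) * g t) integrable_on {0..1}"
proof -
  have m: "mono_on {0..1} (\<lambda>t. t * (g t - g 0))"
  proof (rule mono_onI)
    fix r s :: real assume rs: "r \<in> {0..1}" "s \<in> {0..1}" "r \<le> s"
    have "g 0 \<le> g r" "g r \<le> g s" using assms rs by (auto simp: mono_on_def)
    then show "r * (g r - g 0) \<le> s * (g s - g 0)"
      using rs by (intro mult_mono) auto
  qed
  have i1: "(\<lambda>t. t * (g t - g 0)) integrable_on {0..1}"
    by (rule integrable_on_mono_on[OF m])
  have i2: "g integrable_on {0..1}" by (rule integrable_on_mono_on[OF assms])
  have i3: "(\<lambda>t. t * g 0) integrable_on {0..1}"
    by (intro integrable_continuous_interval continuous_intros)
  have "(\<lambda>t. t * (g t - g 0) + t * g 0 - (1/2) * g t) integrable_on {0..1}"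
    using i1 i2 i3 by (intro integrable_diff integrable_add integrable_cmul) auto
  moreover have "(\<lambda>t. t * (g t - g 0) + t * g 0 - (1/2) * g t) = (\<lambda>t. (t - 1/2) * g t)"
    by (auto simp: algebra_simps)
  ultimately show ?thesis by simp
qed

lemma key_bound:
  fixes g :: "real \<Rightarrow> real"
  assumes "mono_on {0..1} g"
  shows "4 * integral {0..1} (\<lambda>t. (t - 1/2) * g t) \<le> g 1 - g 0"
proof -
  define c where "c = (g 0 + g 1) / 2"
  have i: "(\<lambda>t. (t - 1/2) * g t) integrable_on {0..1}" by (rule tg_integrable[OF assms])
  have ic: "(\<lambda>t. (t - 1/2) * c) integrable_on {0..1}"
    by (intro integrable_continuous_interval continuous_intros)
  have pw: "(t - 1/2) * g t - (t - 1/2) * c \<le> (g 1 - g 0) / 4" if t: "t \<in> {0..1}" for t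
  proof -
    have "g 0 \<le> g t" "g t \<le> g 1" using assms t by (auto simp: mono_on_def)
    then have h: "g 0 \<le> g t" "g t \<le> g 1" by auto
    show ?thesis
    proof (cases "t \<ge> 1/2")
      case True
      have "(t - 1/2) * (g t - c) \<le> (1/2) * ((g 1 - g 0)/2)"
      proof (cases "g t \<ge> c")
        case True
        have "g t - c \<le> (g 1 - g 0)/2" using h by (simp add: c_def field_simps)
        then show ?thesis using True \<open>t \<ge> 1/2\<close> t by (intro mult_mono) auto
      next
        case False
        then have "(t - 1/2) * (g t - c) \<le> 0" using \<open>t \<ge> 1/2\<close>
          by (intro mult_nonneg_nonpos) auto
        moreover have "0 \<le> 1/2 * ((g 1 - g 0)/2)" using h by auto
        ultimately show ?thesis by (rule order_trans)
      qed
      moreover have "(t-1/2)*g t - (t-1/2)*c = (t-1/2)*(g t - c)" by (simp add: right_diff_distrib)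
      ultimately show ?thesis by linarith
    next
      case False
      have "(1/2 - t) * (c - g t) \<le> (1/2) * ((g 1 - g 0)/2)"
      proof (cases "g t \<le> c")
        case True
        have "c - g t \<le> (g 1 - g 0)/2" using h by (simp add: c_def field_simps)
        then show ?thesis using True False t by (intro mult_mono) auto
      next
        case F2: False
        then have "(1/2 - t) * (c - g t) \<le> 0" using False
          by (intro mult_nonneg_nonpos) auto
        moreover have "0 \<le> 1/2 * ((g 1 - g 0)/2)" using h by auto
        ultimately show ?thesis by (rule order_trans)
      qed
      moreover have "(t-1/2)*g t - (t-1/2)*c = (1/2 - t)*(c - g t)" by (simp add: right_diff_distrib left_diff_distrib)
      ultimately show ?thesis by linarith
    qed
  qed
  have L1: "integral {0..1} (\<lambda>t. (t - 1/2) * g t - (t - 1/2) * c) \<le> integral {0..1} (\<lambda>t::real. (g 1 - g 0) / 4)"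
  proof -
    have idiff: "(\<lambda>t. (t-1/2)*g t - (t-1/2)*c) integrable_on {0..1}" using i ic by (rule integrable_diff)
    have iconst: "(\<lambda>t::real. (g 1 - g 0)/4) integrable_on {0..1}" by (intro integrable_continuous_real continuous_intros)
    show ?thesis by (rule integral_le[OF idiff iconst pw])
  qed
  have L2: "integral {0..1} (\<lambda>t. (t - 1/2) * g t - (t - 1/2) * c)
      = integral {0..1} (\<lambda>t. (t - 1/2) * g t) - integral {0..1} (\<lambda>t. (t - 1/2) * c)"
    using i ic by (rule integral_diff)
  have L3: "integral {0..1} (\<lambda>t. (t - 1/2) * c) = 0"
  proof -
    define F where "F = (\<lambda>t::real. (t^2/2 - t/2) * c)"
    have "((\<lambda>t. (t - 1/2) * c) has_integral (F 1 - F 0)) {0..1}"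
    proof (rule fundamental_theorem_of_calculus)
      fix x :: real assume "x \<in> {0..1}"
      have "(F has_real_derivative ((x - 1/2) * c)) (at x within {0..1})"
        unfolding F_def by (auto intro!: derivative_eq_intros simp: algebra_simps)
      then show "(F has_vector_derivative ((x - 1/2) * c)) (at x within {0..1})"
        by (simp add: has_real_derivative_iff_has_vector_derivative)
    qed simp
    moreover have "F 1 - F 0 = 0" by (simp add: F_def)
    ultimately show ?thesis by (metis integral_unique)
  qed
  have L4: "integral {0..1} (\<lambda>t::real. (g 1 - g 0) / 4) = (g 1 - g 0) / 4" by simp
  have "integral {0..1} (\<lambda>t. (t - 1/2) * g t) \<le> (g 1 - g 0) / 4"
    using L1 unfolding L2 L3 L4 by simp
  then show ?thesis by simp
qed

lemma part1:
  fixes a b v :: real and g :: "real \<Rightarrow> real"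
  assumes "a \<ge> 0" "b \<ge> 0" "0 \<le> v" "v \<le> 1"
    and "mono_on {0..1} g" and "g 1 \<noteq> g 0"
  shows "wgeo v a b + 4 / (g 1 - g 0) *
           integral {0..1} (\<lambda>t. (heron t v a b - heron (1/2) v a b) * g t)
         \<le> wari v a b"
proof -
  define D where "D = wari v a b - wgeo v a b"
  define I where "I = integral {0..1} (\<lambda>t. (t - 1/2) * g t)"
  have D0: "D \<ge> 0" using amgm[OF assms(1-4)] by (simp add: D_def)
  have "g 0 \<le> g 1" using assms(5) by (auto simp: mono_on_def)
  then have gpos: "g 1 - g 0 > 0" using assms(6) by linarith
  have "(\<lambda>t. (heron t v a b - heron (1/2) v a b) * g t) = (\<lambda>t. D * ((t - 1/2) * g t))"
    by (auto simp: heron_def D_def algebra_simps)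
  then have eq: "integral {0..1} (\<lambda>t. (heron t v a b - heron (1/2) v a b) * g t) = D * I"
    by (simp add: I_def)
  have "4 * I \<le> g 1 - g 0" using key_bound[OF assms(5)] by (simp add: I_def)
  then have "4 * I / (g 1 - g 0) \<le> 1" using gpos by (simp add: divide_le_eq)
  then have "D * (4 * I / (g 1 - g 0)) \<le> D * 1" using D0 by (intro mult_left_mono) auto
  moreover have e2: "4 / (g 1 - g 0) * (D * I) = D * (4 * I / (g 1 - g 0))" by simp
  ultimately show ?thesis unfolding eq e2 using D_def by linarith
qed

theorem theorem2p1:
  fixes a b v :: real and g :: "real \<Rightarrow> real"
  assumes "a \<ge> 0" "b \<ge> 0" "0 \<le> v" "v \<le> 1"
    and "mono_on {0..1} g" and "g 1 \<noteq> g 0"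
  shows "(wgeo v a b + 4 / (g 1 - g 0) *
           integral {0..1} (\<lambda>t. (heron t v a b - heron (1/2) v a b) * g t)
         \<le> wari v a b)
       \<and> (wgeo (1/2) a b + 4 / (g 1 - g 0) *
           (integral {0..1} (\<lambda>t. g t * heron t (1/2) a b)
            - heron (1/2) (1/2) a b * integral {0..1} g)
         \<le> wari (1/2) a b)"
proof
  show "wgeo v a b + 4 / (g 1 - g 0) *
           integral {0..1} (\<lambda>t. (heron t v a b - heron (1/2) v a b) * g t)
         \<le> wari v a b" by (rule part1[OF assms])
  have p: "wgeo (1/2) a b + 4 / (g 1 - g 0) *
           integral {0..1} (\<lambda>t. (heron t (1/2) a b - heron (1/2) (1/2) a b) * g t)
         \<le> wari (1/2) a b" using assms by (intro part1) auto
  define H where "H = heron (1/2) (1/2) a b"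
  have ig: "g integrable_on {0..1}" by (rule integrable_on_mono_on[OF assms(5)])
  have ihg: "(\<lambda>t. H * g t) integrable_on {0..1}" using ig by (rule integrable_on_mult_right)
  have "(\<lambda>t. (heron t (1/2) a b - H) * g t) = (\<lambda>t. H * g t + (wari (1/2) a b - wgeo (1/2) a b) * ((t - 1/2) * g t) - H * g t)"
    by (auto simp: heron_def H_def algebra_simps)
  have it: "(\<lambda>t. g t * heron t (1/2) a b) = (\<lambda>t. H * g t + (wari (1/2) a b - wgeo (1/2) a b) * ((t - 1/2) * g t))"
    by (auto simp: heron_def H_def algebra_simps)
  have i2: "(\<lambda>t. g t * heron t (1/2) a b) integrable_on {0..1}"
    unfolding it using ig ihg tg_integrable[OF assms(5)] by (intro integrable_add integrable_on_mult_right) auto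
  have "integral {0..1} (\<lambda>t. (heron t (1/2) a b - H) * g t)
      = integral {0..1} (\<lambda>t. g t * heron t (1/2) a b - H * g t)"
    by (rule arg_cong[where f="integral {0..1}"]) (auto simp: algebra_simps)
  also have "\<dots> = integral {0..1} (\<lambda>t. g t * heron t (1/2) a b) - integral {0..1} (\<lambda>t. H * g t)"
    using i2 ihg by (rule integral_diff)
  also have "integral {0..1} (\<lambda>t. H * g t) = H * integral {0..1} g"
    by (simp add: integral_mult_right)
  finally show "wgeo (1/2) a b + 4 / (g 1 - g 0) *
           (integral {0..1} (\<lambda>t. g t * heron t (1/2) a b)
            - heron (1/2) (1/2) a b * integral {0..1} g)
         \<le> wari (1/2) a b" using p by (simp add: H_def)
qed

end
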